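(* Let $m\ge0$ be an integer and let $\tau_1,\dots,\tau_T$ be nonnegative integers with $\tau_t\le m$ and $t+\tau_t\le T$ for all $t$. Then $\widetilde\tau_s\le2m$ for all $s=1,\dots,T$.
   Context: In each period $t\in\{1,\dots,T\}$ a claim is generated and is observed at time $t+\tau_t$. Define $N(t)=\#\{i\in\{1,\dots,t-1\}: i+\tau_i<t\}$, the number of claims observed by the end of period $t-1$. For $s=1,\dots,T$, let $\rho(s)$ be the time at which the $s$-th claim (claims ordered by observation time, ties broken arbitrarily) is observed, and set $\widetilde\tau_s=s-1-N(\rho(s))$. *)

theory Defs
  imports Main
begin

text \<open>Claim t (1 \<le> t \<le> T) is generated in period t and observed at time t + tau t.\<close>

definition num_observed :: "(nat \<Rightarrow> nat) \<Rightarrow> nat \<Rightarrow> nat" where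
  "num_observed tau t = card {i \<in> {1..<t}. i + tau i < t}"

text \<open>rho(s): observation time of the s-th claim when claims are ordered by
  observation time, i.e. the s-th smallest element (1-based) of the multiset of
  observation times t + tau t, t = 1..T (independent of tie breaking).\<close>
definition obs_time :: "(nat \<Rightarrow> nat) \<Rightarrow> nat \<Rightarrow> nat \<Rightarrow> nat" where
  "obs_time tau T s = sort (map (\<lambda>t. t + tau t) [1..<T+1]) ! (s - 1)"

definition tilde_tau :: "(nat \<Rightarrow> nat) \<Rightarrow> nat \<Rightarrow> nat \<Rightarrow> int" where
  "tilde_tau tau T s = int s - 1 - int (num_observed tau (obs_time tau T s))"

end

theory Submission
  imports Defs
begin

theorem lemma9:
  fixes tau :: "nat \<Rightarrow> nat" and T m :: nat
  assumes "\<forall>t\<in>{1..T}. tau t \<le> m"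
      and "\<forall>t\<in>{1..T}. t + tau t \<le> T"
  shows "\<forall>s\<in>{1..T}. tilde_tau tau T s \<le> 2 * int m"
proof
  fix s assume s: "s \<in> {1..T}"
  define f where "f = (\<lambda>t. t + tau t)"
  define xs where "xs = sort (map f [1..<T+1])"
  define r where "r = obs_time tau T s"
  have r: "r = xs ! (s-1)" unfolding r_def xs_def obs_time_def f_def by simp
  have len: "length xs = T" unfolding xs_def by simp
  have srt: "sorted xs" unfolding xs_def by simp
  have sl: "s - 1 < length xs" using s len by auto
  have "r \<in> set xs" using r sl by simp
  hence "r \<in> f ` {1..T}" unfolding xs_def by auto
  hence rT: "r \<le> T" using assms(2) unfolding f_def by auto
  have tk: "\<forall>x\<in>set (take s xs). x \<le> r"
  proof
    fix x assume "x \<in> set (take s xs)"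
    then obtain k where k: "k < length (take s xs)" "x = take s xs ! k"
      by (auto simp: in_set_conv_nth)
    hence "k \<le> s - 1" "k < length xs" by auto
    thus "x \<le> r" using k srt sl r by (simp add: sorted_nth_mono)
  qed
  have "s = length (filter (\<lambda>x. x \<le> r) (take s xs))"
    using tk sl by (simp add: filter_True)
  also have "\<dots> \<le> length (filter (\<lambda>x. x \<le> r) xs)"
  proof -
    have "filter (\<lambda>x. x \<le> r) xs = filter (\<lambda>x. x \<le> r) (take s xs) @ filter (\<lambda>x. x \<le> r) (drop s xs)"
      by (metis append_take_drop_id filter_append)
    thus ?thesis by simp
  qed
  also have "\<dots> = length (filter (\<lambda>x. x \<le> r) (map f [1..<T+1]))"
    unfolding xs_def by (simp only: filter_sort length_sort)
  also have "\<dots> = length (filter (\<lambda>t. f t \<le> r) [1..<T+1])"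
    by (simp only: filter_map length_map o_def)
  also have "\<dots> = card {t\<in>{1..<T+1}. f t \<le> r}"
    proof -
    have d: "distinct (filter (\<lambda>t. f t \<le> r) [1..<T+1])" by (rule distinct_filter, rule distinct_upt)
    have e: "set (filter (\<lambda>t. f t \<le> r) [1..<T+1]) = {t\<in>{1..<T+1}. f t \<le> r}"
      by (simp only: set_filter set_upt)
    show ?thesis using distinct_card[OF d] e by (simp only:)
  qed
  also have "\<dots> \<le> card {1..r}"
    by (rule card_mono) (auto simp: f_def)
  finally have sr: "s \<le> r" by simp
  have "{1..r-1-m} \<subseteq> {i \<in> {1..<r}. i + tau i < r}"
  proof
    fix i assume i: "i \<in> {1..r-1-m}"
    hence "i \<le> T" using rT by auto
    hence "tau i \<le> m" using assms(1) i by auto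
    thus "i \<in> {i \<in> {1..<r}. i + tau i < r}" using i by auto
  qed
  hence "card {1..r-1-m} \<le> num_observed tau r"
    unfolding num_observed_def by (intro card_mono) auto
  hence "r - 1 - m \<le> num_observed tau r" by simp
  thus "tilde_tau tau T s \<le> 2 * int m"
    unfolding tilde_tau_def r_def[symmetric] using sr s by linarith
qed

end
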